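(* Let $G$ be a forest. Then the independence complex $\Delta(G)$ is sortable if and only if each connected component (tree) of $G$ is a path graph.
   Context: The independence complex $\Delta(G)$ is the simplicial complex of all independent sets of $G$. For finite $F,G\subset\mathbb{N}$ with $|F|=r,|G|=s$, write $\mathbf{x}^F\mathbf{x}^G=x_{i_1}\cdots x_{i_{r+s}}$ with $i_1\le\cdots\le i_{r+s}$ (where $\mathbf{x}^F=\prod_{i\in F}x_i$) and set $\mathrm{sort}(F,G)=(\{i_k:k\text{ odd}\},\{i_k:k\text{ even}\})$. A simplicial complex $\Delta$ with $V(\Delta)\subset\mathbb{N}$ is sortable with respect to the given labeling if $\mathrm{sort}(F,G)\in\Delta\times\Delta$ for all $F,G\in\Delta$; $\Delta$ is sortable if it is sortable with respect to some labeling of its vertices by distinct integers. *)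

theory Defs
  imports Main "HOL-Library.Multiset"
begin

definition simple_graph :: "'a set \<Rightarrow> 'a set set \<Rightarrow> bool" where
  "simple_graph V E \<longleftrightarrow> finite V \<and> (\<forall>e\<in>E. \<exists>u v. e = {u, v} \<and> u \<noteq> v \<and> u \<in> V \<and> v \<in> V)"

definition adj :: "'a set set \<Rightarrow> 'a \<Rightarrow> 'a \<Rightarrow> bool" where
  "adj E u v \<longleftrightarrow> {u, v} \<in> E"

definition is_cycle :: "'a set \<Rightarrow> 'a set set \<Rightarrow> 'a list \<Rightarrow> bool" where
  "is_cycle V E xs \<longleftrightarrow> length xs \<ge> 3 \<and> distinct xs \<and> set xs \<subseteq> V
     \<and> (\<forall>i. Suc i < length xs \<longrightarrow> adj E (xs ! i) (xs ! Suc i))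
     \<and> adj E (last xs) (hd xs)"

definition forest :: "'a set \<Rightarrow> 'a set set \<Rightarrow> bool" where
  "forest V E \<longleftrightarrow> simple_graph V E \<and> \<not> (\<exists>xs. is_cycle V E xs)"

definition reachable :: "'a set \<Rightarrow> 'a set set \<Rightarrow> 'a \<Rightarrow> 'a \<Rightarrow> bool" where
  "reachable V E u v \<longleftrightarrow> u \<in> V \<and> v \<in> V \<and> (\<lambda>x y. x \<in> V \<and> y \<in> V \<and> adj E x y)\<^sup>*\<^sup>* u v"

definition components :: "'a set \<Rightarrow> 'a set set \<Rightarrow> 'a set set" where
  "components V E = {{w. reachable V E v w} | v. v \<in> V}"

text \<open>The induced subgraph on C is a path graph P_n (n = |C| >= 1):
  C can be listed without repetition so that two vertices of C are adjacent
  iff they are consecutive in the list.\<close>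
definition is_path_graph :: "'a set set \<Rightarrow> 'a set \<Rightarrow> bool" where
  "is_path_graph E C \<longleftrightarrow> (\<exists>xs. xs \<noteq> [] \<and> distinct xs \<and> set xs = C \<and>
     (\<forall>i j. i < length xs \<longrightarrow> j < length xs \<longrightarrow>
        (adj E (xs ! i) (xs ! j) \<longleftrightarrow> i = Suc j \<or> j = Suc i)))"

definition indep_complex :: "'a set \<Rightarrow> 'a set set \<Rightarrow> 'a set set" where
  "indep_complex V E = {F. F \<subseteq> V \<and> (\<forall>u\<in>F. \<forall>v\<in>F. \<not> adj E u v)}"

text \<open>sort(F,G): sort the multiset union, take entries at odd (1-based) positions
  and at even (1-based) positions.\<close>
definition sort_pair :: "nat set \<Rightarrow> nat set \<Rightarrow> nat set \<times> nat set" where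
  "sort_pair F G = (let L = sorted_list_of_multiset (mset_set F + mset_set G) in
     ({L ! k | k. k < length L \<and> even k}, {L ! k | k. k < length L \<and> odd k}))"

definition sortable_wrt :: "nat set set \<Rightarrow> bool" where
  "sortable_wrt \<Delta> \<longleftrightarrow> (\<forall>F\<in>\<Delta>. \<forall>G\<in>\<Delta>. fst (sort_pair F G) \<in> \<Delta> \<and> snd (sort_pair F G) \<in> \<Delta>)"

definition sortable :: "'a set \<Rightarrow> 'a set set \<Rightarrow> bool" where
  "sortable V \<Delta> \<longleftrightarrow> (\<exists>f :: 'a \<Rightarrow> nat. inj_on f V \<and> sortable_wrt ((\<lambda>F. f ` F) ` \<Delta>))"

end

theory Submission
  imports Defs
begin

lemma adj_sym: "adj E u v \<Longrightarrow> adj E v u"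
  by (simp add: adj_def insert_commute)

lemma adj_V: assumes "simple_graph V E" "adj E u v" shows "u \<in> V \<and> v \<in> V \<and> u \<noteq> v"
proof -
  have "{u, v} \<in> E" using assms(2) by (simp add: adj_def)
  then obtain a b where ab: "{u, v} = {a, b}" "a \<noteq> b" "a \<in> V" "b \<in> V"
    using assms(1) unfolding simple_graph_def by blast
  then show ?thesis by (auto simp: doubleton_eq_iff)
qed

lemma rt_sym:
  assumes "(\<lambda>x y. x \<in> V \<and> y \<in> V \<and> adj E x y)\<^sup>*\<^sup>* u v"
  shows "(\<lambda>x y. x \<in> V \<and> y \<in> V \<and> adj E x y)\<^sup>*\<^sup>* v u"
  using assms
proof (induction rule: rtranclp_induct)
  case base show ?case by (rule rtranclp.rtrancl_refl)
next
  case (step y z)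
  then have "z \<in> V \<and> y \<in> V \<and> adj E z y" using adj_sym[of E y z] by simp
  then show ?case using step(3) by (rule converse_rtranclp_into_rtranclp)
qed

lemma reach_sym:
  assumes "reachable V E u v" shows "reachable V E v u"
  using assms rt_sym[of V E u v] unfolding reachable_def by simp

lemma reach_trans:
  "reachable V E u v \<Longrightarrow> reachable V E v w \<Longrightarrow> reachable V E u w"
  unfolding reachable_def using rtranclp_trans by fastforce

lemma reach_step:
  assumes "reachable V E u v" "w \<in> V" "adj E v w" shows "reachable V E u w"
proof -
  have "(\<lambda>x y. x \<in> V \<and> y \<in> V \<and> adj E x y)\<^sup>*\<^sup>* u v" "v \<in> V" "u \<in> V"
    using assms(1) unfolding reachable_def by auto
  moreover have "v \<in> V \<and> w \<in> V \<and> adj E v w" using assms(2,3) \<open>v \<in> V\<close> by simp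
  ultimately have "(\<lambda>x y. x \<in> V \<and> y \<in> V \<and> adj E x y)\<^sup>*\<^sup>* u w"
    using rtranclp.rtrancl_into_rtrancl[of "\<lambda>x y. x \<in> V \<and> y \<in> V \<and> adj E x y" u v w] by blast
  then show ?thesis using assms(2) \<open>u \<in> V\<close> unfolding reachable_def by simp
qed

lemma reach_refl: "v \<in> V \<Longrightarrow> reachable V E v v"
  unfolding reachable_def by simp

lemma comp_obtain: "C \<in> components V E \<Longrightarrow> \<exists>v\<in>V. C = {w. reachable V E v w}"
  unfolding components_def by blast

lemma comp_sub: "C \<in> components V E \<Longrightarrow> C \<subseteq> V"
  unfolding components_def reachable_def by blast

lemma comp_eq:
  assumes "C \<in> components V E" "C' \<in> components V E" "y \<in> C" "y \<in> C'"
  shows "C = C'"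
proof -
  obtain v where v: "C = {w. reachable V E v w}" using comp_obtain[OF assms(1)] by blast
  obtain v' where v': "C' = {w. reachable V E v' w}" using comp_obtain[OF assms(2)] by blast
  have r1: "reachable V E v y" using assms(3) v by simp
  have r2: "reachable V E v' y" using assms(4) v' by simp
  have vv: "reachable V E v v'" using reach_trans[OF r1 reach_sym[OF r2]] .
  have vv': "reachable V E v' v" using reach_sym[OF vv] .
  show ?thesis
  proof (rule set_eqI)
    fix w
    show "w \<in> C \<longleftrightarrow> w \<in> C'"
      using reach_trans[OF vv, of w] reach_trans[OF vv', of w] v v' by auto
  qed
qed

lemma comp_adj:
  assumes "simple_graph V E" "C \<in> components V E" "x \<in> C" "adj E x y"
  shows "y \<in> C"
proof -
  obtain v where v: "C = {w. reachable V E v w}" using comp_obtain[OF assms(2)] by blast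
  have "y \<in> V" using adj_V[OF assms(1,4)] by simp
  then have "reachable V E v y" using reach_step[of V E v x y] assms(3,4) v by simp
  then show ?thesis using v by simp
qed

lemma reach_exit:
  assumes "(\<lambda>x y. x \<in> V \<and> y \<in> V \<and> adj E x y)\<^sup>*\<^sup>* a b" "a \<in> S" "b \<notin> S"
  shows "\<exists>x y. x \<in> S \<and> y \<notin> S \<and> adj E x y"
  using assms
proof (induction rule: rtranclp_induct)
  case base then show ?case by simp
next
  case (step y z) then show ?case by (cases "y \<in> S") auto
qed

lemma comp_union: "\<Union>(components V E) = V"
proof
  show "\<Union>(components V E) \<subseteq> V" using comp_sub by blast
  show "V \<subseteq> \<Union>(components V E)"
  proof
    fix v assume "v \<in> V"
    then have "v \<in> {w. reachable V E v w}" "{w. reachable V E v w} \<in> components V E"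
      using reach_refl unfolding components_def by auto
    then show "v \<in> \<Union>(components V E)" by blast
  qed
qed

definition chain :: "'a set set \<Rightarrow> 'a list \<Rightarrow> bool" where
  "chain E xs \<longleftrightarrow> (\<forall>i. Suc i < length xs \<longrightarrow> adj E (xs!i) (xs!Suc i))"

lemma chain_induced:
  assumes F: "forest V E" and d: "distinct xs" and s: "set xs \<subseteq> V" and c: "chain E xs"
    and i: "i < length xs" and j: "j < length xs"
  shows "adj E (xs!i) (xs!j) \<longleftrightarrow> i = Suc j \<or> j = Suc i"
proof
  assume "i = Suc j \<or> j = Suc i" then show "adj E (xs!i) (xs!j)"
  proof
    assume h: "i = Suc j"
    have "adj E (xs!j) (xs!Suc j)" using c i h unfolding chain_def by auto
    then show ?thesis using h adj_sym[of E "xs!j" "xs!Suc j"] by simp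
  next
    assume h: "j = Suc i"
    show ?thesis using c j h unfolding chain_def by auto
  qed
next
  have sg: "simple_graph V E" using F forest_def by auto
  have key: "b = Suc a" if ab: "adj E (xs!a) (xs!b)" "a < b" "b < length xs" for a b
  proof (rule ccontr)
    assume nb: "b \<noteq> Suc a"
    define ys where "ys = take (b - a + 1) (drop a xs)"
    have len: "length ys = b - a + 1" using ab unfolding ys_def by auto
    have nth: "ys!k = xs!(a+k)" if "k < length ys" for k
      using that ab len unfolding ys_def by auto
    have "is_cycle V E ys"
      unfolding is_cycle_def
    proof (intro conjI allI impI)
      show "3 \<le> length ys" using len ab nb by auto
      show "distinct ys" unfolding ys_def using d by auto
      show "set ys \<subseteq> V" unfolding ys_def using s set_take_subset set_drop_subset by (meson subset_trans)
      fix k assume k: "Suc k < length ys"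
      have "Suc (a + k) < length xs" using k len ab by auto
      then have "adj E (xs!(a+k)) (xs!Suc (a+k))" using c unfolding chain_def by auto
      then show "adj E (ys!k) (ys!Suc k)" using nth[of k] nth[of "Suc k"] k by auto
    next
      have ne: "ys \<noteq> []" using len by auto
      have "last ys = xs!b" using nth[of "length ys - 1"] len ne ab by (simp add: last_conv_nth)
      moreover have "hd ys = xs!a" using nth[of 0] ne by (simp add: hd_conv_nth)
      ultimately show "adj E (last ys) (hd ys)" using adj_sym[OF ab(1)] by simp
    qed
    then show False using F forest_def by auto
  qed
  assume a: "adj E (xs!i) (xs!j)"
  then have "xs!i \<noteq> xs!j" using adj_V[OF sg] by blast
  then have "i \<noteq> j" by auto
  then consider "i < j" | "j < i" by linarith
  then show "i = Suc j \<or> j = Suc i"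
  proof cases
    case 1 then show ?thesis using key[OF a 1 j] by simp
  next
    case 2 then show ?thesis using key[OF adj_sym[OF a] 2 i] by simp
  qed
qed

lemma forest_deg2_path:
  assumes F: "forest V E"
    and D: "\<And>c x y z. adj E c x \<Longrightarrow> adj E c y \<Longrightarrow> adj E c z \<Longrightarrow> x \<noteq> y \<Longrightarrow> x \<noteq> z \<Longrightarrow> y \<noteq> z \<Longrightarrow> False"
    and C: "C \<in> components V E"
  shows "is_path_graph E C"
proof -
  have sg: "simple_graph V E" using F forest_def by auto
  obtain v where v: "v \<in> V" "C = {w. reachable V E v w}" using comp_obtain[OF C] by blast
  have CV: "C \<subseteq> V" using comp_sub[OF C] .
  define P where "P xs \<longleftrightarrow> xs \<noteq> [] \<and> distinct xs \<and> set xs \<subseteq> C \<and> chain E xs" for xs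
  have P1: "P [v]" unfolding P_def chain_def using v reach_refl by auto
  have bnd: "\<forall>ys. P ys \<longrightarrow> length ys < Suc (card V)"
  proof (intro allI impI)
    fix ys assume "P ys"
    then have "distinct ys" "set ys \<subseteq> V" using CV unfolding P_def by auto
    then have "length ys \<le> card V"
      using distinct_card[of ys] card_mono[of V "set ys"] sg unfolding simple_graph_def by auto
    then show "length ys < Suc (card V)" by simp
  qed
  obtain xs where xs: "P xs" and mx: "\<And>ys. P ys \<Longrightarrow> length ys \<le> length xs"
    using Lattices_Big.ex_has_greatest_nat[of P "[v]" length "Suc (card V)", OF P1 bnd] by blast
  have xsC: "set xs \<subseteq> C" and ne: "xs \<noteq> []" and dx: "distinct xs" and cx: "chain E xs"
    using xs unfolding P_def by auto
  have full: "set xs = C"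
  proof (rule ccontr)
    assume "set xs \<noteq> C"
    then obtain w where w: "w \<in> C" "w \<notin> set xs" using xsC by blast
    have "hd xs \<in> C" using ne xsC by auto
    then have "reachable V E v (hd xs)" using v by simp
    moreover have "reachable V E v w" using w v by simp
    ultimately have "reachable V E (hd xs) w" using reach_sym reach_trans by metis
    then have "(\<lambda>x y. x \<in> V \<and> y \<in> V \<and> adj E x y)\<^sup>*\<^sup>* (hd xs) w" unfolding reachable_def by blast
    then obtain x y where xy: "x \<in> set xs" "y \<notin> set xs" "adj E x y"
      using reach_exit[of V E "hd xs" w "set xs"] w ne by auto
    have yC: "y \<in> C" using comp_adj[OF sg C] xy xsC by blast
    obtain i where i: "i < length xs" "xs!i = x" using xy(1) in_set_conv_nth by metis
    consider "i = 0" | "i \<noteq> 0 \<and> i = length xs - 1" | "0 < i \<and> i < length xs - 1" using i by linarith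
    then show False
    proof cases
      case 1
      have "P (y # xs)" unfolding P_def chain_def
      proof (intro conjI allI impI)
        show "y # xs \<noteq> []" by simp
        show "distinct (y # xs)" using dx xy by simp
        show "set (y # xs) \<subseteq> C" using xsC yC by simp
        fix k assume k: "Suc k < length (y # xs)"
        show "adj E ((y # xs) ! k) ((y # xs) ! Suc k)"
        proof (cases k)
          case 0 then show ?thesis using adj_sym[OF xy(3)] i 1 by simp
        next
          case (Suc k') then show ?thesis using cx k unfolding chain_def by simp
        qed
      qed
      then show False using mx[of "y#xs"] by simp
    next
      case 2
      have "P (xs @ [y])" unfolding P_def chain_def
      proof (intro conjI allI impI)
        show "xs @ [y] \<noteq> []" by simp
        show "distinct (xs @ [y])" using dx xy by simp
        show "set (xs @ [y]) \<subseteq> C" using xsC yC by simp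
        fix k assume k: "Suc k < length (xs @ [y])"
        show "adj E ((xs @ [y]) ! k) ((xs @ [y]) ! Suc k)"
        proof (cases "Suc k < length xs")
          case True then show ?thesis using cx unfolding chain_def by (simp add: nth_append)
        next
          case False
          then have "k = i" using k 2 by simp
          then show ?thesis using False k i xy(3) by (simp add: nth_append)
        qed
      qed
      then show False using mx[of "xs @ [y]"] by simp
    next
      case 3
      have si: "Suc (i-1) = i" using 3 by simp
      have "Suc (i-1) < length xs" using 3 i by simp
      then have "adj E (xs!(i-1)) (xs!Suc (i-1))" using cx unfolding chain_def by blast
      then have "adj E (xs!(i-1)) x" using si i by simp
      then have a1: "adj E x (xs!(i-1))" by (rule adj_sym)
      have a2: "adj E x (xs!Suc i)" using cx 3 i unfolding chain_def by auto
      have l1: "i-1 < length xs" and l2: "Suc i < length xs" using 3 i by auto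
      have "xs!(i-1) \<noteq> xs!Suc i"
      proof
        assume "xs!(i-1) = xs!Suc i"
        then have "i-1 = Suc i" using nth_eq_iff_index_eq[OF dx l1 l2] by simp
        then show False by simp
      qed
      moreover have "y \<noteq> xs!(i-1)" "y \<noteq> xs!Suc i" using xy(2) 3 i by auto
      ultimately show False using D[OF a1 a2 xy(3)] by metis
    qed
  qed
  have sxV: "set xs \<subseteq> V" using xsC CV by auto
  show ?thesis unfolding is_path_graph_def
    by (intro exI[of _ xs] conjI allI impI ne dx full chain_induced[OF F dx sxV cx])
qed

lemma count_two:
  assumes "i < j" "j < length L" "L!i = x" "L!j = x"
  shows "2 \<le> count (mset L) x"
proof -
  have eq: "L = take j L @ L!j # drop (Suc j) L" using assms id_take_nth_drop by blast
  have "count (mset L) x = count (mset (take j L)) x + 1 + count (mset (drop (Suc j) L)) x"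
    by (subst eq) (simp add: assms)
  moreover have "x \<in> set (take j L)" using assms by (metis in_set_conv_nth length_take min.absorb4 nth_take)
  then have "0 < count (mset (take j L)) x" by simp
  ultimately show ?thesis by linarith
qed

lemma sort_adj:
  fixes A B :: "nat set"
  assumes fin: "finite A" "finite B"
    and Ld: "L = sorted_list_of_multiset (mset_set A + mset_set B)"
    and k: "k < length L" "L!k = a" and m: "m < length L" "L!m = Suc a" and par: "even k = even m"
  shows "(a \<in> A \<and> a \<in> B) \<or> (Suc a \<in> A \<and> Suc a \<in> B)"
proof (rule ccontr)
  assume nc: "\<not> ?thesis"
  have cnt: "count (mset L) x = (if x \<in> A then 1 else 0) + (if x \<in> B then 1 else 0)" for x
    using fin unfolding Ld by (simp add: count_mset_set')
  have c1: "count (mset L) a < 2" "count (mset L) (Suc a) < 2" using nc cnt by auto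
  have s: "sorted L" unfolding Ld by simp
  have km: "k < m"
  proof (rule ccontr)
    assume "\<not> k < m"
    then have "L!m \<le> L!k" using s k m sorted_nth_mono by (metis not_less)
    then show False using k m by simp
  qed
  have "m = Suc k"
  proof (rule ccontr)
    assume "m \<noteq> Suc k"
    then have sk: "Suc k < m" using km by simp
    have "L!k \<le> L!(Suc k)" "L!(Suc k) \<le> L!m"
      using sorted_nth_mono[OF s, of k "Suc k"] sorted_nth_mono[OF s, of "Suc k" m] sk m by auto
    then have "L!(Suc k) = a \<or> L!(Suc k) = Suc a" using k m by auto
    then show False
    proof
      assume "L!(Suc k) = a"
      then show False using count_two[of k "Suc k" L a] c1 k m sk by simp
    next
      assume "L!(Suc k) = Suc a"
      then show False using count_two[of "Suc k" m L "Suc a"] c1 k m sk by simp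
    qed
  qed
  then show False using par by simp
qed

lemma concat_paths:
  assumes sg: "simple_graph V E"
  shows "distinct cs \<Longrightarrow> set cs \<subseteq> components V E \<Longrightarrow> (\<forall>C\<in>set cs. is_path_graph E C) \<Longrightarrow>
    \<exists>L. distinct L \<and> set L = \<Union>(set cs) \<and>
      (\<forall>i j. i < length L \<longrightarrow> j < length L \<longrightarrow> adj E (L!i) (L!j) \<longrightarrow> i = Suc j \<or> j = Suc i)"
proof (induction cs)
  case Nil then show ?case by auto
next
  case (Cons C cs)
  obtain L where L: "distinct L" "set L = \<Union>(set cs)"
    and LA: "\<forall>i j. i < length L \<longrightarrow> j < length L \<longrightarrow> adj E (L!i) (L!j) \<longrightarrow> i = Suc j \<or> j = Suc i"
    using Cons by auto
  obtain xs where xs: "xs \<noteq> []" "distinct xs" "set xs = C"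
    and xA: "\<forall>i j. i < length xs \<longrightarrow> j < length xs \<longrightarrow> (adj E (xs!i) (xs!j) \<longleftrightarrow> i = Suc j \<or> j = Suc i)"
    using Cons.prems unfolding is_path_graph_def by auto
  have Cc: "C \<in> components V E" using Cons.prems by simp
  have notin: "C \<notin> set cs" using Cons.prems by simp
  have cross: "\<not> adj E u w" if u: "u \<in> set xs" and w: "w \<in> set L" for u w
  proof
    assume a: "adj E u w"
    then have wC: "w \<in> C" using comp_adj[OF sg Cc] u xs by blast
    obtain C' where C': "C' \<in> set cs" "w \<in> C'" using w L by blast
    have "C' \<in> components V E" using Cons.prems C' by auto
    then have "C = C'" using comp_eq[OF Cc _ wC C'(2)] by simp
    then show False using notin C' by simp
  qed
  have disj: "set xs \<inter> set L = {}"
  proof (rule ccontr)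
    assume "set xs \<inter> set L \<noteq> {}"
    then obtain w where w: "w \<in> C" "w \<in> set L" using xs by blast
    obtain C' where C': "C' \<in> set cs" "w \<in> C'" using w L by blast
    have "C' \<in> components V E" using Cons.prems C' by auto
    then have "C = C'" using comp_eq[OF Cc _ w(1) C'(2)] by simp
    then show False using notin C' by simp
  qed
  show ?case
  proof (intro exI[of _ "xs @ L"] conjI allI impI)
    show "distinct (xs @ L)" using xs L disj by simp
    show "set (xs @ L) = \<Union>(set (C # cs))" using xs L by simp
    fix i j assume ij: "i < length (xs @ L)" "j < length (xs @ L)" "adj E ((xs @ L)!i) ((xs @ L)!j)"
    show "i = Suc j \<or> j = Suc i"
    proof (cases "i < length xs")
      case True note iT = this
      show ?thesis
      proof (cases "j < length xs")
        case True then show ?thesis using xA iT ij by (simp add: nth_append)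
      next
        case False
        then have "(xs @ L)!j \<in> set L" using ij by (simp add: nth_append)
        moreover have "(xs @ L)!i \<in> set xs" using iT by (simp add: nth_append)
        ultimately show ?thesis using cross ij(3) by blast
      qed
    next
      case False note iF = this
      show ?thesis
      proof (cases "j < length xs")
        case True
        then have "(xs @ L)!j \<in> set xs" by (simp add: nth_append)
        moreover have "(xs @ L)!i \<in> set L" using ij iF by (simp add: nth_append)
        ultimately show ?thesis using cross adj_sym[OF ij(3)] by blast
      next
        case False
        have "adj E (L!(i - length xs)) (L!(j - length xs))" using ij iF False by (simp add: nth_append)
        then have "i - length xs = Suc (j - length xs) \<or> j - length xs = Suc (i - length xs)"
          using LA ij iF False by auto
        then show ?thesis using iF False by auto
      qed
    qed
  qed
qed

lemma paths_sortable:
  assumes F: "forest V E" and P: "\<forall>C\<in>components V E. is_path_graph E C"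
  shows "sortable V (indep_complex V E)"
proof -
  have sg: "simple_graph V E" using F forest_def by auto
  have finV: "finite V" using sg simple_graph_def by auto
  have fin: "finite (components V E)"
    using comp_sub finV by (metis Pow_iff finite_Pow_iff finite_subset subsetI)
  obtain cs where cs: "distinct cs" "set cs = components V E" using finite_distinct_list[OF fin] by blast
  obtain L where L: "distinct L" "set L = V"
    and LA: "\<forall>i j. i < length L \<longrightarrow> j < length L \<longrightarrow> adj E (L!i) (L!j) \<longrightarrow> i = Suc j \<or> j = Suc i"
    using concat_paths[OF sg cs(1)] cs P comp_union[of V E] by auto
  define n where "n = length L"
  define f where "f = (\<lambda>v. SOME i. i < n \<and> L!i = v)"
  have fv: "f v < n \<and> L!(f v) = v" if "v \<in> V" for v
  proof -
    have "v \<in> set L" using that L by simp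
    then have "\<exists>i. i < n \<and> L!i = v" using n_def in_set_conv_nth[of v L] by auto
    then show ?thesis unfolding f_def by (rule someI_ex)
  qed
  have fL: "f (L!i) = i" if "i < n" for i
  proof -
    have "L!i \<in> V" using that L n_def by auto
    then have "f (L!i) < n" "L!(f (L!i)) = L!i" using fv by auto
    then show ?thesis using L(1) that n_def by (simp add: nth_eq_iff_index_eq)
  qed
  have inj: "inj_on f V" using fv by (metis inj_onI)
  have memF: "L!a \<in> X" if "a \<in> f ` X" "X \<subseteq> V" for a X
    using that fv by auto
  have good: "S \<in> (\<lambda>F. f ` F) ` indep_complex V E"
    if S: "S \<subseteq> f ` F \<union> f ` G" and F: "F \<in> indep_complex V E" and G: "G \<in> indep_complex V E"
      and nad: "\<And>a. a \<in> S \<Longrightarrow> Suc a \<in> S \<Longrightarrow> \<not> adj E (L!a) (L!Suc a)" for S F G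
  proof -
    have FV: "F \<subseteq> V" "G \<subseteq> V" using F G unfolding indep_complex_def by auto
    have Sn: "S \<subseteq> {..<n}" using S FV fv by auto
    define H where "H = (\<lambda>i. L!i) ` S"
    have "H \<in> indep_complex V E" unfolding indep_complex_def
    proof (intro CollectI conjI ballI)
      show "H \<subseteq> V" using Sn L n_def unfolding H_def by auto
      fix u w assume u: "u \<in> H" and w: "w \<in> H"
      then obtain a b where ab: "a \<in> S" "b \<in> S" "u = L!a" "w = L!b" unfolding H_def by blast
      show "\<not> adj E u w"
      proof
        assume ad: "adj E u w"
        have "a < length L" "b < length L" using ab Sn n_def by auto
        then have "a = Suc b \<or> b = Suc a" using LA ad ab by blast
        then show False
        proof
          assume "a = Suc b" then show False using nad[of b] ab adj_sym[OF ad] by auto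
        next
          assume "b = Suc a" then show False using nad[of a] ab ad by auto
        qed
      qed
    qed
    moreover have "f ` H = S"
    proof -
      have "f ` H = (\<lambda>i. f (L!i)) ` S" unfolding H_def by (simp add: image_image)
      also have "\<dots> = (\<lambda>i. i) ` S"
        by (rule image_cong) (use Sn fL in auto)
      also have "\<dots> = S" by simp
      finally show ?thesis .
    qed
    ultimately show ?thesis using image_eqI[of S "\<lambda>F. f ` F" H "indep_complex V E"] by simp
  qed
  have main: "fst (sort_pair FF GG) \<in> (\<lambda>F. f ` F) ` indep_complex V E \<and>
      snd (sort_pair FF GG) \<in> (\<lambda>F. f ` F) ` indep_complex V E"
    if "FF \<in> (\<lambda>F. f ` F) ` indep_complex V E" "GG \<in> (\<lambda>F. f ` F) ` indep_complex V E" for FF GG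
  proof -
    from that obtain F G where FG: "F \<in> indep_complex V E" "G \<in> indep_complex V E" "FF = f ` F" "GG = f ` G"
      by blast
    have FV: "F \<subseteq> V" "G \<subseteq> V" using FG unfolding indep_complex_def by auto
    have finA: "finite (f ` F)" "finite (f ` G)" using FV finV by (auto intro: finite_subset)
    define Ls where "Ls = sorted_list_of_multiset (mset_set (f ` F) + mset_set (f ` G))"
    have setLs: "set Ls = f ` F \<union> f ` G" unfolding Ls_def using finA by simp
    have part: "{Ls!k | k. k < length Ls \<and> P k} \<in> (\<lambda>F. f ` F) ` indep_complex V E"
      if Pp: "\<And>k m. P k \<Longrightarrow> P m \<Longrightarrow> even k = even m" for P
    proof (rule good[OF _ FG(1,2)])
      show "{Ls!k | k. k < length Ls \<and> P k} \<subseteq> f ` F \<union> f ` G"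
      proof
        fix b assume "b \<in> {Ls!k | k. k < length Ls \<and> P k}"
        then have "\<exists>k. b = Ls!k \<and> k < length Ls" by auto
        then have "b \<in> set Ls" by (auto simp: in_set_conv_nth)
        then show "b \<in> f ` F \<union> f ` G" using setLs by simp
      qed
      fix a assume a1: "a \<in> {Ls!k | k. k < length Ls \<and> P k}" and a2: "Suc a \<in> {Ls!k | k. k < length Ls \<and> P k}"
      from a1 have "\<exists>k. a = Ls!k \<and> k < length Ls \<and> P k" by simp
      then obtain k where k: "k < length Ls" "P k" "Ls!k = a" by auto
      from a2 have "\<exists>k. Suc a = Ls!k \<and> k < length Ls \<and> P k" by simp
      then obtain m where m: "m < length Ls" "P m" "Ls!m = Suc a" by auto
      have "Ls!k \<in> set Ls" "Ls!m \<in> set Ls" using k(1) m(1) by simp_all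
      then have aAB: "a \<in> f ` F \<union> f ` G" "Suc a \<in> f ` F \<union> f ` G" using k(3) m(3) setLs by simp_all
      have or: "(a \<in> f ` F \<and> a \<in> f ` G) \<or> (Suc a \<in> f ` F \<and> Suc a \<in> f ` G)"
        using sort_adj[OF finA Ls_def k(1,3) m(1,3) Pp[OF k(2) m(2)]] .
      have iF: "\<not> adj E (L!x) (L!y)" if "x \<in> f ` F" "y \<in> f ` F" for x y
        using FG(1) memF[OF that(1) FV(1)] memF[OF that(2) FV(1)] unfolding indep_complex_def by blast
      have iG: "\<not> adj E (L!x) (L!y)" if "x \<in> f ` G" "y \<in> f ` G" for x y
        using FG(2) memF[OF that(1) FV(2)] memF[OF that(2) FV(2)] unfolding indep_complex_def by blast
      show "\<not> adj E (L!a) (L!Suc a)"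
        using or aAB iF iG by blast
    qed
    have e1: "fst (sort_pair FF GG) = {Ls!k | k. k < length Ls \<and> even k}"
      unfolding sort_pair_def Ls_def FG(3,4) by (simp add: Let_def)
    have e2: "snd (sort_pair FF GG) = {Ls!k | k. k < length Ls \<and> odd k}"
      unfolding sort_pair_def Ls_def FG(3,4) by (simp add: Let_def)
    have "fst (sort_pair FF GG) \<in> (\<lambda>F. f ` F) ` indep_complex V E"
      unfolding e1 by (rule part) simp
    moreover have "snd (sort_pair FF GG) \<in> (\<lambda>F. f ` F) ` indep_complex V E"
      unfolding e2 by (rule part) simp
    ultimately show ?thesis by (rule conjI)
  qed
  have sw: "sortable_wrt ((\<lambda>F. f ` F) ` indep_complex V E)"
    unfolding sortable_wrt_def using main by blast
  show ?thesis unfolding sortable_def using inj sw by blast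
qed

lemma no_triangle:
  assumes F: "forest V E" and a: "adj E c x" "adj E c y" "adj E x y"
  shows False
proof -
  have sg: "simple_graph V E" using F forest_def by auto
  have "is_cycle V E [c, x, y]" unfolding is_cycle_def
  proof (intro conjI allI impI)
    show "distinct [c, x, y]" using adj_V[OF sg a(1)] adj_V[OF sg a(2)] adj_V[OF sg a(3)] by auto
    show "set [c, x, y] \<subseteq> V" using adj_V[OF sg a(1)] adj_V[OF sg a(2)] by auto
    fix i assume "Suc i < length [c, x, y]"
    then have "i = 0 \<or> i = 1" by auto
    then show "adj E ([c, x, y] ! i) ([c, x, y] ! Suc i)" using a by auto
  next
    show "3 \<le> length [c, x, y]" by simp
    show "adj E (last [c, x, y]) (hd [c, x, y])" using adj_sym[OF a(2)] by simp
  qed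
  then show False using F forest_def by auto
qed

lemma sortable_deg:
  assumes F: "forest V E" and S: "sortable V (indep_complex V E)"
    and a: "adj E c x" "adj E c y" "adj E c z" "x \<noteq> y" "x \<noteq> z" "y \<noteq> z"
  shows False
proof -
  have sg: "simple_graph V E" using F forest_def by auto
  obtain f where inj: "inj_on f V" and sw: "sortable_wrt ((\<lambda>F. f ` F) ` indep_complex V E)"
    using S unfolding sortable_def by blast
  have V: "c \<in> V" "x \<in> V" "y \<in> V" "z \<in> V" "c \<noteq> x" "c \<noteq> y" "c \<noteq> z"
    using adj_V[OF sg a(1)] adj_V[OF sg a(2)] adj_V[OF sg a(3)] by auto
  have I1: "{c} \<in> indep_complex V E" unfolding indep_complex_def
    using V adj_V[OF sg, of c c] by auto
  have I2: "{x, y, z} \<in> indep_complex V E" unfolding indep_complex_def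
    using V adj_V[OF sg, of x x] adj_V[OF sg, of y y] adj_V[OF sg, of z z]
      no_triangle[OF F a(1) a(2)] no_triangle[OF F a(2) a(1)]
      no_triangle[OF F a(1) a(3)] no_triangle[OF F a(3) a(1)]
      no_triangle[OF F a(2) a(3)] no_triangle[OF F a(3) a(2)] by auto
  have fd: "f c \<noteq> f x" "f c \<noteq> f y" "f c \<noteq> f z" "f x \<noteq> f y" "f x \<noteq> f z" "f y \<noteq> f z"
    using inj V a(4-6) unfolding inj_on_def by metis+
  define A where "A = f ` {c}"
  define B where "B = f ` {x, y, z}"
  have AB: "A = {f c}" "B = {f x, f y, f z}" unfolding A_def B_def by auto
  define Ls where "Ls = sorted_list_of_multiset (mset_set A + mset_set B)"
  have mL: "mset Ls = mset_set A + mset_set B" unfolding Ls_def by simp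
  have len: "length Ls = 4"
  proof -
    have "length Ls = size (mset Ls)" by simp
    also have "\<dots> = card A + card B" unfolding mL by simp
    also have "\<dots> = 4" unfolding AB using fd by simp
    finally show ?thesis .
  qed
  have setLs: "set Ls = {f c, f x, f y, f z}"
  proof -
    have "set Ls = set_mset (mset_set A + mset_set B)" unfolding Ls_def by (rule set_sorted_list_of_multiset)
    also have "\<dots> = {f c, f x, f y, f z}" unfolding AB by auto
    finally show ?thesis .
  qed
  have cnt: "count (mset Ls) (f c) = 1" unfolding mL AB using fd by (simp add: count_mset_set')
  obtain p where p: "p < 4" "Ls!p = f c" using setLs len by (metis in_set_conv_nth insertI1)
  define q where "q = (if p < 2 then p + 2 else p - 2)"
  have q: "q < 4" "q \<noteq> p" "even q = even p" unfolding q_def using p by auto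
  have "Ls!q \<noteq> f c"
  proof
    assume "Ls!q = f c"
    then have "2 \<le> count (mset Ls) (f c)"
      using count_two[of p q Ls "f c"] count_two[of q p Ls "f c"] p q len by (cases "p < q") auto
    then show False using cnt by simp
  qed
  moreover have "Ls!q \<in> set Ls" using q len by simp
  ultimately have lq: "Ls!q \<in> {f x, f y, f z}" using setLs by auto
  define T where "T = {Ls!k | k. k < length Ls \<and> even k = even p}"
  have Aim: "A \<in> (\<lambda>F. f ` F) ` indep_complex V E" unfolding A_def by (rule imageI[OF I1])
  have Bim: "B \<in> (\<lambda>F. f ` F) ` indep_complex V E" unfolding B_def by (rule imageI[OF I2])
  have both: "fst (sort_pair A B) \<in> (\<lambda>F. f ` F) ` indep_complex V E \<and>
      snd (sort_pair A B) \<in> (\<lambda>F. f ` F) ` indep_complex V E"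
    using sw Aim Bim unfolding sortable_wrt_def by blast
  have "T \<in> (\<lambda>F. f ` F) ` indep_complex V E"
  proof (cases "even p")
    case True
    then have "T = fst (sort_pair A B)" unfolding T_def sort_pair_def Ls_def by (simp add: Let_def)
    then show ?thesis using both by simp
  next
    case False
    then have "T = snd (sort_pair A B)" unfolding T_def sort_pair_def Ls_def by (simp add: Let_def)
    then show ?thesis using both by simp
  qed
  then obtain H where H: "H \<in> indep_complex V E" "T = f ` H" by blast
  have HV: "H \<subseteq> V" using H unfolding indep_complex_def by auto
  have "f c \<in> T" unfolding T_def using p len by (intro CollectI exI[of _ p]) simp
  then obtain c' where c': "c' \<in> H" "f c' = f c" using H by auto
  then have cH: "c \<in> H" using inj HV V unfolding inj_on_def by blast
  have "Ls!q \<in> T" unfolding T_def using q len by (intro CollectI exI[of _ q]) simp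
  then obtain l where l: "l \<in> H" "f l = Ls!q" using H by auto
  have lV: "l \<in> V" using l HV by auto
  have "f l = f x \<or> f l = f y \<or> f l = f z" using l(2) lq by simp
  then have "l = x \<or> l = y \<or> l = z" by (metis inj_onD[OF inj _ lV] V(2-4))
  then have "l \<in> {x, y, z}" by simp
  then have "adj E c l" using a by auto
  then show False using H cH l unfolding indep_complex_def by blast
qed

theorem corollary1p10:
  fixes V :: "'a set" and E :: "'a set set"
  assumes "forest V E"
  shows "sortable V (indep_complex V E) \<longleftrightarrow> (\<forall>C\<in>components V E. is_path_graph E C)"
proof
  assume S: "sortable V (indep_complex V E)"
  show "\<forall>C\<in>components V E. is_path_graph E C"
    using forest_deg2_path[OF assms] sortable_deg[OF assms S] by blast
next
  assume "\<forall>C\<in>components V E. is_path_graph E C"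
  then show "sortable V (indep_complex V E)" using paths_sortable[OF assms] by blast
qed

end
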